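(* Let $w=w_0w_1w_2\ldots$ be a one-sided infinite word over a finite alphabet $\mathcal A=\{a_1,\dots,a_k\}$ and fix $1\le j\le k$ such that $a_j$ occurs infinitely often in $w$. If the difference sequence $(p_j(n)-p_j(n-1))_{n\ge2}$ takes only finitely many values, then $P_{a_j}(X)\in\mathbb{Q}(X)$ if the sequence $(1_{a_j}(w_n))_{n\ge0}$ is eventually periodic, and $P_{a_j}(X)$ is transcendental over $\mathbb{Q}(X)$ if $(1_{a_j}(w_n))_{n\ge0}$ is not eventually periodic.
   Context: Positions in $w$ are indexed starting from $0$. For $n\ge1$, $p_j(n)$ denotes the position of the $n$-th occurrence of $a_j$ in $w$, and $P_{a_j}(X)=\sum_{n\ge1}p_j(n)X^n$. $1_{a_j}$ is the indicator function of $a_j$. A sequence is eventually periodic if there exist $N$, $d\ge1$ with $s_{n+d}=s_n$ for all $n\ge N$. Transcendence over $\mathbb{Q}(X)$ is meant inside $\mathbb{C}((X))$. *)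

theory Defs
  imports "HOL-Computational_Algebra.Computational_Algebra" "HOL-Library.Infinite_Set"
begin

text \<open>Position (indexed from 0) of the n-th occurrence (n \<ge> 1) of letter a in w.\<close>
definition occ_pos :: "(nat \<Rightarrow> 'a) \<Rightarrow> 'a \<Rightarrow> nat \<Rightarrow> nat" where
  "occ_pos w a n = enumerate {i. w i = a} (n - 1)"

definition pos_series :: "(nat \<Rightarrow> 'a) \<Rightarrow> 'a \<Rightarrow> complex fps" where
  "pos_series w a = Abs_fps (\<lambda>n. if n = 0 then 0 else of_nat (occ_pos w a n))"

definition indicator_seq :: "(nat \<Rightarrow> 'a) \<Rightarrow> 'a \<Rightarrow> nat \<Rightarrow> nat" where
  "indicator_seq w a n = (if w n = a then 1 else 0)"

definition eventually_periodic :: "(nat \<Rightarrow> 'b) \<Rightarrow> bool" where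
  "eventually_periodic s \<longleftrightarrow> (\<exists>N d. d \<ge> 1 \<and> (\<forall>n\<ge>N. s (n + d) = s n))"

definition ratpoly_fps :: "rat poly \<Rightarrow> complex fps" where
  "ratpoly_fps q = fps_of_poly (map_poly of_rat q)"

definition in_rat_fun_field :: "complex fps \<Rightarrow> bool" where
  "in_rat_fun_field F \<longleftrightarrow> (\<exists>A B. B \<noteq> 0 \<and> ratpoly_fps B * F = ratpoly_fps A)"

text \<open>F is transcendental over Q(X): no nonzero polynomial in Y with coefficients in Q(X)
  vanishes at F; after clearing denominators, coefficients may be taken in Q[X].\<close>
definition transcendental_rat_fun :: "complex fps \<Rightarrow> bool" where
  "transcendental_rat_fun F \<longleftrightarrow>
     (\<forall>Q :: rat poly poly. Q \<noteq> 0 \<longrightarrow> poly (map_poly ratpoly_fps Q) F \<noteq> 0)"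

end

theory Submission
  imports Defs
begin

lemma lin_dep_exists:
  fixes f :: "'i \<Rightarrow> 'k \<Rightarrow> 'a::field"
  assumes "finite K" "finite I" "card I > card K"
  shows "\<exists>lam. (\<exists>i\<in>I. lam i \<noteq> 0) \<and> (\<forall>k\<in>K. (\<Sum>i\<in>I. lam i * f i k) = 0)"
  using assms
proof (induction K arbitrary: I f rule: finite_induct)
  case empty
  then obtain i where "i \<in> I" by fastforce
  then show ?case by (intro exI[of _ "\<lambda>_. 1"]) auto
next
  case (insert k0 K)
  show ?case
  proof (cases "\<exists>i\<in>I. f i k0 \<noteq> 0")
    case False
    have "card I > card K" using insert by simp
    from insert.IH[OF insert.prems(1) this] obtain lam where
      l: "\<exists>i\<in>I. lam i \<noteq> 0" "\<forall>k\<in>K. (\<Sum>i\<in>I. lam i * f i k) = 0" by blast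
    have "(\<Sum>i\<in>I. lam i * f i k0) = 0" using False by simp
    with l show ?thesis by (intro exI[of _ lam]) auto
  next
    case True
    then obtain i0 where i0: "i0 \<in> I" "f i0 k0 \<noteq> 0" by blast
    define I' where "I' = I - {i0}"
    define g where "g i k = f i k - (f i k0 / f i0 k0) * f i0 k" for i k
    have fI': "finite I'" using insert.prems I'_def by simp
    have cI': "card I' > card K" using insert i0 by (simp add: I'_def)
    from insert.IH[OF fI' cI', of g] obtain mu where
      m: "\<exists>i\<in>I'. mu i \<noteq> 0" "\<forall>k\<in>K. (\<Sum>i\<in>I'. mu i * g i k) = 0" by blast
    define lam where "lam i = (if i = i0 then - (\<Sum>j\<in>I'. mu j * f j k0) / f i0 k0 else mu i)" for i
    have key: "(\<Sum>i\<in>I. lam i * f i k) = (\<Sum>i\<in>I'. mu i * g i k)" for k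
    proof -
      have e1: "(\<Sum>i\<in>I. lam i * f i k) = lam i0 * f i0 k + (\<Sum>i\<in>I'. lam i * f i k)"
        using insert.prems i0 unfolding I'_def by (simp add: sum.remove)
      have e3: "(\<Sum>i\<in>I'. lam i * f i k) = (\<Sum>i\<in>I'. mu i * f i k)"
        by (rule sum.cong) (auto simp: lam_def I'_def)
      have e2: "(\<Sum>i\<in>I'. mu i * g i k) = (\<Sum>i\<in>I'. mu i * f i k) - (\<Sum>i\<in>I'. mu i * f i k0) / f i0 k0 * f i0 k"
        by (simp add: g_def algebra_simps sum_subtractf sum_distrib_left sum_distrib_right sum_divide_distrib)
      have e4: "lam i0 = - (\<Sum>j\<in>I'. mu j * f j k0) / f i0 k0" by (simp add: lam_def)
      show ?thesis unfolding e1 e2 e3 e4 by (simp add: algebra_simps)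
    qed
    have gk0: "g i k0 = 0" for i using i0 by (simp add: g_def)
    show ?thesis
    proof (intro exI[of _ lam] conjI ballI)
      from m(1) obtain i where "i \<in> I'" "mu i \<noteq> 0" by blast
      then show "\<exists>i\<in>I. lam i \<noteq> 0" by (intro bexI[of _ i]) (auto simp: lam_def I'_def)
    next
      fix k assume "k \<in> insert k0 K"
      then show "(\<Sum>i\<in>I. lam i * f i k) = 0" using key m(2) gk0 by auto
    qed
  qed
qed

lemma const_rec_periodic:
  fixes g :: "nat \<Rightarrow> 'a::field" and c :: "nat \<Rightarrow> 'a"
  assumes fin: "finite (range g)" and nz: "\<exists>t\<le>R. c t \<noteq> 0"
    and rec: "\<And>n. n \<ge> N0 \<Longrightarrow> (\<Sum>t\<le>R. c t * g (n+t)) = 0"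
  shows "eventually_periodic g"
proof -
  define T where "T = Max {t. t \<le> R \<and> c t \<noteq> 0}"
  have finT: "finite {t. t \<le> R \<and> c t \<noteq> 0}" by simp
  have neT: "{t. t \<le> R \<and> c t \<noteq> 0} \<noteq> {}" using nz by auto
  have T_in: "T \<le> R \<and> c T \<noteq> 0" using Max_in[OF finT neT] unfolding T_def by blast
  have T_max: "c t = 0" if "T < t" "t \<le> R" for t
    using Max_ge[OF finT, of t] that unfolding T_def by fastforce
  have rec': "g (n+T) = - (\<Sum>t<T. c t * g (n+t)) / c T" if "n \<ge> N0" for n
  proof -
    have "(\<Sum>t\<le>R. c t * g (n+t)) = (\<Sum>t\<le>T. c t * g (n+t))"
      by (rule sum.mono_neutral_right) (use T_in T_max in auto)
    also have "\<dots> = (\<Sum>t<T. c t * g (n+t)) + c T * g (n+T)"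
      by (simp add: lessThan_Suc_atMost[symmetric])
    finally have "(\<Sum>t<T. c t * g (n+t)) + c T * g (n+T) = 0" using rec[OF that] by simp
    then show ?thesis using T_in by (simp add: field_simps eq_neg_iff_add_eq_0)
  qed
  define u where "u n = restrict (\<lambda>t. g (n+t)) {..<T}" for n
  have "u ` {N0..} \<subseteq> PiE {..<T} (\<lambda>_. range g)" unfolding u_def by (auto simp: PiE_def extensional_def)
  hence finu: "finite (u ` {N0..})" by (rule finite_subset) (intro finite_PiE; simp add: fin)
  obtain a where a: "a \<in> {N0..}" "infinite {b\<in>{N0..}. u b = u a}"
    using pigeonhole_infinite[OF infinite_Ici finu] by auto
  then obtain b where b: "b > a" "b \<in> {N0..}" "u b = u a"
    unfolding infinite_nat_iff_unbounded by blast
  have eq: "g (a+j) = g (b+j)" for j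
  proof (induction j rule: less_induct)
    case (less j)
    show ?case
    proof (cases "j < T")
      case True
      then show ?thesis using fun_cong[OF b(3), of j] by (simp add: u_def)
    next
      case False
      then obtain j' where j': "j = j' + T" by (metis add.commute le_Suc_ex not_less)
      have s: "(\<Sum>t<T. c t * g (a+j'+t)) = (\<Sum>t<T. c t * g (b+j'+t))"
      proof (rule sum.cong[OF refl])
        fix t assume "t \<in> {..<T}"
        hence "j' + t < j" using j' by simp
        from less.IH[OF this] show "c t * g (a+j'+t) = c t * g (b+j'+t)" by (simp add: add.assoc)
      qed
      have "g (a+j) = g ((a+j')+T)" by (simp add: j' add.assoc)
      also have "\<dots> = - (\<Sum>t<T. c t * g (a+j'+t)) / c T" using rec' a(1) by simp
      also have "\<dots> = - (\<Sum>t<T. c t * g (b+j'+t)) / c T" using s by simp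
      also have "\<dots> = g ((b+j')+T)" using rec' b(2) by simp
      also have "\<dots> = g (b+j)" by (simp add: j' add.assoc)
      finally show ?thesis .
    qed
  qed
  show ?thesis unfolding eventually_periodic_def
  proof (rule exI[of _ a], rule exI[of _ "b-a"], intro conjI allI impI)
    show "1 \<le> b - a" using b by simp
    fix n assume "a \<le> n"
    have "g (n + (b-a)) = g (b + (n-a))" using \<open>a\<le>n\<close> b by (simp add: algebra_simps)
    also have "\<dots> = g (a + (n-a))" using eq by simp
    also have "\<dots> = g n" using \<open>a\<le>n\<close> by simp
    finally show "g (n + (b-a)) = g n" .
  qed
qed

lemma roots_nat_finite:
  fixes p :: "complex poly" assumes "p \<noteq> 0" shows "finite {n::nat. poly p (of_nat n) = 0}"
  using finite_vimageI[OF poly_roots_finite[OF assms], of "of_nat :: nat \<Rightarrow> complex"] inj_of_nat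
  by (simp add: vimage_def)

lemma poly_rec_periodic:
  fixes g :: "nat \<Rightarrow> complex" and q :: "nat \<Rightarrow> complex poly"
  assumes fin: "finite (range g)" and nz: "\<exists>t\<le>R. q t \<noteq> 0"
    and rec: "\<And>n. (\<Sum>t\<le>R. poly (q t) (of_nat n) * g (n+t)) = 0"
  shows "eventually_periodic g"
proof -
  define D where "D = Max ((\<lambda>t. degree (q t)) ` {..R})"
  obtain t2 where t2: "t2 \<le> R" "degree (q t2) = D"
  proof -
    have "D \<in> (\<lambda>t. degree (q t)) ` {..R}" unfolding D_def by (rule Max_in) auto
    then show ?thesis using that by auto
  qed
  have Dge: "degree (q t) \<le> D" if "t \<le> R" for t
    unfolding D_def using that by (intro Max_ge) auto
  obtain t1 where t1: "t1 \<le> R" "coeff (q t1) D \<noteq> 0"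
  proof (cases "q t2 = 0")
    case False
    then show ?thesis using that[of t2] t2 by (metis leading_coeff_0_iff)
  next
    case True
    then have "D = 0" using t2 by simp
    from nz obtain t0 where "t0 \<le> R" "q t0 \<noteq> 0" by blast
    moreover have "degree (q t0) = 0" using Dge[OF \<open>t0 \<le> R\<close>] \<open>D = 0\<close> by simp
    ultimately show ?thesis using that[of t0] \<open>D = 0\<close>
      by (metis leading_coeff_0_iff)
  qed
  define P where "P v = (\<Sum>t\<le>R. smult (v t) (q t))" for v :: "nat \<Rightarrow> complex"
  define win where "win n = restrict (\<lambda>t. g (n+t)) {..R}" for n
  have polyP: "poly (P (win n)) (of_nat n) = 0" for n
  proof -
    have "poly (P (win n)) (of_nat n) = (\<Sum>t\<le>R. poly (q t) (of_nat n) * g (n+t))"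
      unfolding P_def by (simp add: poly_sum win_def mult.commute)
    then show ?thesis using rec by simp
  qed
  have "win ` UNIV \<subseteq> PiE {..R} (\<lambda>_. range g)" unfolding win_def
    by (auto simp: PiE_def extensional_def)
  hence finw: "finite (win ` UNIV)" by (rule finite_subset) (intro finite_PiE; simp add: fin)
  define Bad where "Bad = {n. P (win n) \<noteq> 0}"
  have "Bad \<subseteq> (\<Union>v\<in>win ` UNIV \<inter> {v. P v \<noteq> 0}. of_nat -` {x. poly (P v) x = 0})"
    unfolding Bad_def using polyP by auto
  moreover have "finite (\<Union>v\<in>win ` UNIV \<inter> {v. P v \<noteq> 0}. (of_nat :: nat \<Rightarrow> complex) -` {x. poly (P v) x = 0})"
    using finw by (intro finite_UN_I) (auto simp: vimage_def intro!: roots_nat_finite)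
  ultimately have "finite Bad" by (rule finite_subset)
  then obtain N0 where N0: "\<And>n. n \<in> Bad \<Longrightarrow> n < N0" using finite_nat_set_iff_bounded by auto
  show ?thesis
  proof (rule const_rec_periodic[OF fin, of R "\<lambda>t. coeff (q t) D" N0])
    show "\<exists>t\<le>R. coeff (q t) D \<noteq> 0" using t1 by blast
    fix n assume "N0 \<le> n"
    then have "P (win n) = 0" using N0 unfolding Bad_def by force
    then have "coeff (P (win n)) D = 0" by simp
    moreover have "coeff (P (win n)) D = (\<Sum>t\<le>R. coeff (q t) D * g (n+t))"
      unfolding P_def by (simp add: coeff_sum win_def mult.commute)
    ultimately show "(\<Sum>t\<le>R. coeff (q t) D * g (n+t)) = 0" by simp
  qed
qed

lemma deriv_iter_nth:
  fixes G :: "complex fps"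
  shows "((fps_deriv ^^ i) G) $ m = pochhammer (of_nat m + 1) i * G $ (m+i)"
proof (induction i arbitrary: m)
  case 0 then show ?case by simp
next
  case (Suc i)
  have "((fps_deriv ^^ Suc i) G) $ m = of_nat (m+1) * ((fps_deriv ^^ i) G) $ (m+1)"
    by (simp add: fps_deriv_nth)
  also have "\<dots> = of_nat (m+1) * (pochhammer (of_nat (m+1) + 1) i * G $ (m+1+i))"
    using Suc by simp
  also have "\<dots> = pochhammer (of_nat m + 1) (Suc i) * G $ (m + Suc i)"
    by (simp add: pochhammer_rec algebra_simps)
  finally show ?case .
qed

lemma poly_poch: "poly (pochhammer [:c, 1:] i) x = pochhammer (c + x) (i::nat)" for c x :: complex
  by (induction i) (simp_all add: pochhammer_rec' algebra_simps)

lemma poch_step: "pochhammer [:c, 1:] (Suc n) = smult (c + of_nat n) (pochhammer [:c, 1:] n) + pCons 0 (pochhammer [:c, 1:] n)"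
  for c :: complex
proof -
  have "[:c, 1:] + (of_nat n :: complex poly) = [:c + of_nat n, 1:]"
    by (simp add: of_nat_poly)
  then show ?thesis by (simp add: pochhammer_rec')
qed

lemma poch_deg: "degree (pochhammer [:c, 1:] i) \<le> i \<and> coeff (pochhammer [:c, 1:] i) i = 1" for c :: complex
proof (induction i)
  case 0 then show ?case by simp
next
  case (Suc n)
  have "degree (pochhammer [:c, 1:] (Suc n)) \<le> Suc n"
    unfolding poch_step using Suc
    by (intro degree_add_le) (auto intro: order.trans[OF degree_pCons_le])
  moreover have "coeff (pochhammer [:c, 1:] (Suc n)) (Suc n) = 1"
    unfolding poch_step using Suc by (simp add: coeff_eq_0)
  ultimately show ?case by blast
qed

lemma dfinite_rec:
  fixes G :: "complex fps" and A :: "nat \<Rightarrow> complex poly"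
  assumes nz: "\<exists>i\<le>r. A i \<noteq> 0" and eq: "(\<Sum>i\<le>r. fps_of_poly (A i) * (fps_deriv ^^ i) G) = 0"
  shows "\<exists>R q. (\<exists>t\<le>R. q t \<noteq> 0) \<and> (\<forall>n. (\<Sum>t\<le>R. poly (q t) (of_nat n) * G $ (n+t)) = 0)"
proof -
  define K where "K = (\<Sum>i\<le>r. degree (A i))"
  have degK: "degree (A i) \<le> K" if "i \<le> r" for i
    unfolding K_def using that by (intro member_le_sum) auto
  define pp where "pp k i = pochhammer [:of_nat (K-k) + 1, 1::complex:] i" for k i
  define q where "q t = (\<Sum>i\<le>r. \<Sum>k\<le>K. if t = K - k + i then smult (coeff (A i) k) (pp k i) else 0)" for t
  define R where "R = K + r"
  have rec: "(\<Sum>t\<le>R. poly (q t) (of_nat n) * G $ (n+t)) = 0" for n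
  proof -
    have "0 = (\<Sum>i\<le>r. fps_of_poly (A i) * (fps_deriv ^^ i) G) $ (n+K)" using eq by simp
    also have "\<dots> = (\<Sum>i\<le>r. (fps_of_poly (A i) * (fps_deriv ^^ i) G) $ (n+K))"
      by (simp add: fps_sum_nth)
    also have "\<dots> = (\<Sum>i\<le>r. \<Sum>k\<le>K. coeff (A i) k * (pochhammer (of_nat (K-k) + 1 + of_nat n) i * G $ (n + (K-k+i))))"
    proof (rule sum.cong[OF refl])
      fix i assume i: "i \<in> {..r}"
      have "(fps_of_poly (A i) * (fps_deriv ^^ i) G) $ (n+K) =
            (\<Sum>k=0..n+K. coeff (A i) k * ((fps_deriv ^^ i) G) $ (n+K-k))"
        by (simp add: fps_mult_nth)
      also have "\<dots> = (\<Sum>k\<le>K. coeff (A i) k * ((fps_deriv ^^ i) G) $ (n+K-k))"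
      proof (rule sum.mono_neutral_right)
        show "\<forall>k\<in>{0..n+K} - {..K}. coeff (A i) k * ((fps_deriv ^^ i) G) $ (n+K-k) = 0"
          using degK[of i] i by (auto simp: coeff_eq_0)
      qed auto
      also have "\<dots> = (\<Sum>k\<le>K. coeff (A i) k * (pochhammer (of_nat (K-k) + 1 + of_nat n) i * G $ (n + (K-k+i))))"
      proof (rule sum.cong[OF refl])
        fix k assume "k \<in> {..K}"
        then have "n+K-k = n + (K-k)" by simp
        then show "coeff (A i) k * ((fps_deriv ^^ i) G) $ (n+K-k) = coeff (A i) k * (pochhammer (of_nat (K-k) + 1 + of_nat n) i * G $ (n + (K-k+i)))"
          by (simp add: deriv_iter_nth algebra_simps)
      qed
      finally show "(fps_of_poly (A i) * (fps_deriv ^^ i) G) $ (n+K) = \<dots>" .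
    qed
    also have "\<dots> = (\<Sum>i\<le>r. \<Sum>k\<le>K. \<Sum>t\<le>R. (if t = K - k + i then coeff (A i) k * poly (pp k i) (of_nat n) * G $ (n+t) else 0))"
    proof (intro sum.cong refl)
      fix i k assume "i \<in> {..r}" "k \<in> {..K}"
      then have "K - k + i \<in> {..R}" by (auto simp: R_def)
      then show "coeff (A i) k * (pochhammer (of_nat (K-k) + 1 + of_nat n) i * G $ (n + (K-k+i))) =
          (\<Sum>t\<le>R. (if t = K - k + i then coeff (A i) k * poly (pp k i) (of_nat n) * G $ (n+t) else 0))"
        by (simp add: pp_def poly_poch)
    qed
    also have "\<dots> = (\<Sum>i\<le>r. \<Sum>t\<le>R. \<Sum>k\<le>K. (if t = K - k + i then coeff (A i) k * poly (pp k i) (of_nat n) * G $ (n+t) else 0))"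
      by (rule sum.cong[OF refl], rule sum.swap)
    also have "\<dots> = (\<Sum>t\<le>R. \<Sum>i\<le>r. \<Sum>k\<le>K. (if t = K - k + i then coeff (A i) k * poly (pp k i) (of_nat n) * G $ (n+t) else 0))"
      by (rule sum.swap)
    also have "\<dots> = (\<Sum>t\<le>R. poly (q t) (of_nat n) * G $ (n+t))"
    proof (rule sum.cong[OF refl])
      fix t
      have pq: "poly (q t) (of_nat n) = (\<Sum>i\<le>r. \<Sum>k\<le>K. (if t = K - k + i then coeff (A i) k * poly (pp k i) (of_nat n) else 0))"
        unfolding q_def poly_sum by (intro sum.cong refl) auto
      show "(\<Sum>i\<le>r. \<Sum>k\<le>K. (if t = K - k + i then coeff (A i) k * poly (pp k i) (of_nat n) * G $ (n+t) else 0)) = poly (q t) (of_nat n) * G $ (n+t)"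
        unfolding pq sum_distrib_right by (intro sum.cong refl) auto
    qed
    finally show ?thesis by simp
  qed
  define i0 where "i0 = Max {i. i \<le> r \<and> A i \<noteq> 0}"
  have fin0: "finite {i. i \<le> r \<and> A i \<noteq> 0}" by simp
  have i0: "i0 \<le> r \<and> A i0 \<noteq> 0" using Max_in[OF fin0] nz unfolding i0_def by auto
  have i0max: "A i = 0" if "i0 < i" "i \<le> r" for i
    using Max_ge[OF fin0, of i] that unfolding i0_def by fastforce
  define k0 where "k0 = degree (A i0)"
  have k0K: "k0 \<le> K" using degK i0 k0_def by auto
  define t0 where "t0 = K - k0 + i0"
  have "coeff (q t0) i0 = (\<Sum>i\<le>r. \<Sum>k\<le>K. if t0 = K - k + i then coeff (A i) k * coeff (pp k i) i0 else 0)"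
    unfolding q_def coeff_sum by (intro sum.cong refl) auto
  also have "\<dots> = (\<Sum>i\<le>r. \<Sum>k\<le>K. if i = i0 \<and> k = k0 then coeff (A i0) k0 else 0)"
  proof (intro sum.cong refl)
    fix i k assume ik: "i \<in> {..r}" "k \<in> {..K}"
    show "(if t0 = K - k + i then coeff (A i) k * coeff (pp k i) i0 else 0) =
          (if i = i0 \<and> k = k0 then coeff (A i0) k0 else 0)"
    proof (cases "i = i0 \<and> k = k0")
      case True then show ?thesis using poch_deg by (simp add: t0_def pp_def)
    next
      case False
      show ?thesis
      proof (cases "i0 < i")
        case True then show ?thesis using i0max ik False by auto
      next
        case False2: False
        show ?thesis
        proof (cases "i < i0")
          case True
          then have "coeff (pp k i) i0 = 0" using poch_deg[of _ i] unfolding pp_def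
            by (intro coeff_eq_0) (meson le_less_trans)
          then show ?thesis using False by (auto split: if_split)
        next
          case False3: False
          then have "i = i0" using False2 by simp
          then show ?thesis using False ik k0K by (auto simp: t0_def)
        qed
      qed
    qed
  qed
  also have "\<dots> = (\<Sum>i\<le>r. if i = i0 then (\<Sum>k\<le>K. if k = k0 then coeff (A i0) k0 else 0) else 0)"
    by (intro sum.cong refl) auto
  also have "\<dots> = coeff (A i0) k0" using i0 k0K by (simp add: sum.delta)
  finally have "coeff (q t0) i0 \<noteq> 0" using i0 by (simp add: k0_def)
  hence "q t0 \<noteq> 0" by auto
  moreover have "t0 \<le> R" using k0K i0 unfolding t0_def R_def by linarith
  ultimately show ?thesis using rec by blast
qed

context
  fixes G :: "complex fps" and d :: nat and Qc :: "nat \<Rightarrow> complex poly"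
  assumes rel_nz: "Qc d \<noteq> 0" and rel_eq: "(\<Sum>l\<le>d. fps_of_poly (Qc l) * G^l) = 0"
    and rel_min: "\<And>d' Q'. Q' d' \<noteq> 0 \<Longrightarrow> (\<Sum>l\<le>d'. fps_of_poly (Q' l) * G^l) = 0 \<Longrightarrow> d \<le> d'"
begin

lemma d_pos: "d > 0"
proof (rule ccontr)
  assume "\<not> d > 0"
  then have "d = 0" by simp
  then have "fps_of_poly (Qc 0) = 0" using rel_eq by simp
  then have "Qc 0 = 0" by (metis fps_of_poly_0 fps_of_poly_eq_iff)
  then show False using rel_nz \<open>d = 0\<close> by simp
qed

definition V where "V = {x. \<exists>r. x = (\<Sum>l<d. fps_of_poly (r l) * G^l)}"

lemma V_intro: "x = (\<Sum>l<d. fps_of_poly (r l) * G^l) \<Longrightarrow> x \<in> V"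
  unfolding V_def by blast

lemma V_add: "x \<in> V \<Longrightarrow> y \<in> V \<Longrightarrow> x + y \<in> V"
  unfolding V_def
proof clarify
  fix r s
  show "\<exists>t. (\<Sum>l<d. fps_of_poly (r l) * G^l) + (\<Sum>l<d. fps_of_poly (s l) * G^l) = (\<Sum>l<d. fps_of_poly (t l) * G^l)"
    by (rule exI[of _ "\<lambda>l. r l + s l"]) (simp add: fps_of_poly_add sum.distrib distrib_right)
qed

lemma V_zero: "0 \<in> V"
  unfolding V_def by (rule CollectI, rule exI[of _ "\<lambda>_. 0"]) simp

lemma V_polymult: "x \<in> V \<Longrightarrow> fps_of_poly p * x \<in> V"
  unfolding V_def
proof clarify
  fix r
  show "\<exists>t. fps_of_poly p * (\<Sum>l<d. fps_of_poly (r l) * G^l) = (\<Sum>l<d. fps_of_poly (t l) * G^l)"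
    by (rule exI[of _ "\<lambda>l. p * r l"]) (simp add: fps_of_poly_mult sum_distrib_left mult.assoc)
qed

lemma V_sum: "(\<And>i. i \<in> S \<Longrightarrow> f i \<in> V) \<Longrightarrow> sum f S \<in> V"
  by (induction S rule: infinite_finite_induct) (auto intro: V_add V_zero)

lemma V_const: "fps_of_poly p \<in> V"
proof -
  have "(\<Sum>l<d. fps_of_poly (if l = 0 then p else 0) * G^l) = (\<Sum>l<d. if l = 0 then fps_of_poly p * G^l else 0)"
    by (intro sum.cong) auto
  also have "\<dots> = fps_of_poly p" using d_pos by (simp add: sum.delta)
  finally show ?thesis by (intro V_intro[of _ "\<lambda>l. if l = 0 then p else 0"]) simp
qed

lemma V_top: "fps_of_poly (Qc d) * G^d \<in> V"
proof -
  have "(\<Sum>l\<le>d. fps_of_poly (Qc l) * G^l) = (\<Sum>l<d. fps_of_poly (Qc l) * G^l) + fps_of_poly (Qc d) * G^d"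
    by (simp add: lessThan_Suc_atMost[symmetric])
  then have "fps_of_poly (Qc d) * G^d = (\<Sum>l<d. fps_of_poly (- Qc l) * G^l)"
    using rel_eq by (simp add: fps_of_poly_uminus sum_negf eq_neg_iff_add_eq_0 add.commute)
  then show ?thesis by (rule V_intro)
qed

lemma V_mult_G: "x \<in> V \<Longrightarrow> fps_of_poly (Qc d) * (G * x) \<in> V"
proof -
  assume "x \<in> V"
  then obtain r where x: "x = (\<Sum>l<d. fps_of_poly (r l) * G^l)" unfolding V_def by blast
  obtain e where e: "d = Suc e" using d_pos by (cases d) auto
  have "G * x = (\<Sum>l<e. fps_of_poly (r l) * G^(Suc l)) + fps_of_poly (r e) * G^d"
    unfolding x e by (simp add: sum_distrib_left algebra_simps)
  then have eq: "fps_of_poly (Qc d) * (G * x) =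
      (\<Sum>l<e. fps_of_poly (Qc d * r l) * G^(Suc l)) + fps_of_poly (r e) * (fps_of_poly (Qc d) * G^d)"
    by (simp add: distrib_left sum_distrib_left fps_of_poly_mult algebra_simps)
  have "(\<Sum>l<e. fps_of_poly (Qc d * r l) * G^(Suc l)) =
        (\<Sum>l<d. fps_of_poly (if l = 0 then 0 else Qc d * r (l - 1)) * G^l)"
    unfolding e sum.lessThan_Suc_shift by simp
  then have "(\<Sum>l<e. fps_of_poly (Qc d * r l) * G^(Suc l)) \<in> V" by (rule V_intro)
  then show ?thesis unfolding eq by (intro V_add V_polymult V_top)
qed

lemma V_mult_Gpow: "x \<in> V \<Longrightarrow> fps_of_poly (Qc d ^ l) * (G^l * x) \<in> V"
proof (induction l)
  case 0 then show ?case by simp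
next
  case (Suc l)
  have eq: "fps_of_poly (Qc d ^ Suc l) * (G^Suc l * x) = fps_of_poly (Qc d) * (G * (fps_of_poly (Qc d ^ l) * (G^l * x)))"
    by (simp add: fps_of_poly_mult fps_of_poly_power algebra_simps)
  show ?case unfolding eq by (rule V_mult_G[OF Suc.IH[OF Suc.prems]])
qed

lemma V_mult: "x \<in> V \<Longrightarrow> y \<in> V \<Longrightarrow> fps_of_poly (Qc d ^ d) * (x * y) \<in> V"
proof -
  assume xV: "x \<in> V" and yV: "y \<in> V"
  then obtain r where x: "x = (\<Sum>l<d. fps_of_poly (r l) * G^l)" unfolding V_def by blast
  have "fps_of_poly (Qc d ^ d) * (x * y) =
      (\<Sum>l<d. fps_of_poly (r l * Qc d ^ (d - l)) * (fps_of_poly (Qc d ^ l) * (G^l * y)))"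
    unfolding x sum_distrib_left sum_distrib_right
  proof (rule sum.cong[OF refl])
    fix l assume "l \<in> {..<d}"
    then have "Qc d ^ d = Qc d ^ (d - l) * Qc d ^ l" by (simp add: power_add[symmetric])
    then show "fps_of_poly (Qc d ^ d) * (fps_of_poly (r l) * G ^ l * y) =
        fps_of_poly (r l * Qc d ^ (d - l)) * (fps_of_poly (Qc d ^ l) * (G ^ l * y))"
      by (simp add: fps_of_poly_mult algebra_simps)
  qed
  also have "\<dots> \<in> V" by (intro V_sum V_polymult V_mult_Gpow yV)
  finally show ?thesis .
qed

definition W where "W = {x. \<exists>c. c \<noteq> 0 \<and> fps_of_poly c * x \<in> V}"

lemma V_W: "x \<in> V \<Longrightarrow> x \<in> W"
  unfolding W_def by (rule CollectI, rule exI[of _ 1]) simp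

lemma W_cancel: "c \<noteq> 0 \<Longrightarrow> fps_of_poly c * x \<in> W \<Longrightarrow> x \<in> W"
  unfolding W_def
proof clarify
  fix c' assume "c \<noteq> 0" "c' \<noteq> 0" "fps_of_poly c' * (fps_of_poly c * x) \<in> V"
  then show "\<exists>c. c \<noteq> 0 \<and> fps_of_poly c * x \<in> V"
    by (intro exI[of _ "c' * c"]) (simp add: fps_of_poly_mult mult.assoc)
qed

lemma W_add: "x \<in> W \<Longrightarrow> y \<in> W \<Longrightarrow> x + y \<in> W"
  unfolding W_def
proof clarify
  fix c1 c2 assume h: "c1 \<noteq> 0" "c2 \<noteq> 0" "fps_of_poly c1 * x \<in> V" "fps_of_poly c2 * y \<in> V"
  have "fps_of_poly (c1 * c2) * (x + y) = fps_of_poly c2 * (fps_of_poly c1 * x) + fps_of_poly c1 * (fps_of_poly c2 * y)"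
    by (simp add: fps_of_poly_mult algebra_simps)
  also have "\<dots> \<in> V" by (rule V_add[OF V_polymult[OF h(3)] V_polymult[OF h(4)]])
  finally show "\<exists>c. c \<noteq> 0 \<and> fps_of_poly c * (x + y) \<in> V" using h by (intro exI[of _ "c1 * c2"]) simp
qed

lemma W_mult: "x \<in> W \<Longrightarrow> y \<in> W \<Longrightarrow> x * y \<in> W"
  unfolding W_def
proof clarify
  fix c1 c2 assume h: "c1 \<noteq> 0" "c2 \<noteq> 0" "fps_of_poly c1 * x \<in> V" "fps_of_poly c2 * y \<in> V"
  have "fps_of_poly (Qc d ^ d * c1 * c2) * (x * y) = fps_of_poly (Qc d ^ d) * ((fps_of_poly c1 * x) * (fps_of_poly c2 * y))"
    by (simp add: fps_of_poly_mult algebra_simps)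
  also have "\<dots> \<in> V" by (rule V_mult[OF h(3) h(4)])
  finally show "\<exists>c. c \<noteq> 0 \<and> fps_of_poly c * (x * y) \<in> V" using h rel_nz
    by (intro exI[of _ "Qc d ^ d * c1 * c2"]) simp
qed

lemma W_const: "fps_of_poly p \<in> W" by (intro V_W V_const)

lemma W_fps_const: "fps_const c \<in> W" using W_const[of "[:c:]"] by (simp add: fps_of_poly_const)

lemma W_of_nat: "(of_nat n :: complex fps) \<in> W"
proof -
  have "fps_const (of_nat n) \<in> W" by (rule W_fps_const)
  then show ?thesis by (simp only: fps_of_nat)
qed

lemma W_neg: "x \<in> W \<Longrightarrow> - x \<in> W"
proof -
  assume "x \<in> W"
  then have "fps_of_poly (-1) * x \<in> W" by (intro W_mult W_const)
  then show ?thesis by (simp add: fps_of_poly_uminus)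
qed

lemma W_diff: "x \<in> W \<Longrightarrow> y \<in> W \<Longrightarrow> x - y \<in> W"
proof -
  assume "x \<in> W" "y \<in> W"
  then have "x + (- y) \<in> W" by (intro W_add W_neg)
  then show ?thesis by (simp only: diff_conv_add_uminus)
qed

lemma W_sum: "(\<And>i. i \<in> S \<Longrightarrow> f i \<in> W) \<Longrightarrow> sum f S \<in> W"
  by (induction S rule: infinite_finite_induct) (auto intro: W_add V_W V_zero)

lemma W_pow: "x \<in> W \<Longrightarrow> x ^ n \<in> W"
  by (induction n) (auto intro: W_mult simp: W_const[of 1, simplified])

lemma W_G: "G \<in> W"
proof -
  have "fps_of_poly (Qc d) * (G * fps_of_poly 1) \<in> V" by (intro V_mult_G V_const)
  then show ?thesis unfolding W_def using rel_nz by auto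
qed

definition H where "H = (\<Sum>l<d. fps_of_poly (smult (of_nat (Suc l)) (Qc (Suc l))) * G^l)"

lemma H_nz: "H \<noteq> 0"
proof
  assume H0: "H = 0"
  define Q' where "Q' l = smult (of_nat (Suc l)) (Qc (Suc l))" for l
  have "Q' (d - 1) \<noteq> 0" using rel_nz d_pos by (simp add: Q'_def)
  moreover have "(\<Sum>l\<le>d-1. fps_of_poly (Q' l) * G^l) = 0"
  proof -
    have "{..d-1} = {..<d}" using d_pos by auto
    then show ?thesis using H0 unfolding H_def Q'_def by simp
  qed
  ultimately have "d \<le> d - 1" by (rule rel_min)
  then show False using d_pos by simp
qed

lemma H_W: "H \<in> W" unfolding H_def by (intro W_sum W_mult W_const W_pow W_G)

lemma HG': "H * fps_deriv G = - (\<Sum>l\<le>d. fps_of_poly (pderiv (Qc l)) * G^l)"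
proof -
  have "0 = fps_deriv (\<Sum>l\<le>d. fps_of_poly (Qc l) * G^l)" using rel_eq by simp
  also have "\<dots> = (\<Sum>l\<le>d. fps_of_poly (pderiv (Qc l)) * G^l) +
       (\<Sum>l\<le>d. fps_of_poly (Qc l) * (of_nat l * fps_deriv G * G^(l-1)))"
    by (simp add: fps_deriv_sum fps_of_poly_pderiv fps_deriv_power' sum.distrib)
  also have "(\<Sum>l\<le>d. fps_of_poly (Qc l) * (of_nat l * fps_deriv G * G^(l-1))) = H * fps_deriv G"
  proof -
    obtain e where e: "d = Suc e" using d_pos by (cases d) auto
    have "(\<Sum>l\<le>d. fps_of_poly (Qc l) * (of_nat l * fps_deriv G * G^(l-1))) =
          (\<Sum>l\<le>e. fps_of_poly (Qc (Suc l)) * (of_nat (Suc l) * fps_deriv G * G^l))"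
      unfolding e sum.atMost_Suc_shift by simp
    also have "\<dots> = (\<Sum>l<d. fps_of_poly (smult (of_nat (Suc l)) (Qc (Suc l))) * G^l) * fps_deriv G"
      unfolding e sum_distrib_right lessThan_Suc_atMost
      by (intro sum.cong refl) (simp add: fps_of_poly_smult fps_of_nat[symmetric] algebra_simps)
    also have "\<dots> = H * fps_deriv G" by (simp add: H_def)
    finally show ?thesis .
  qed
  finally show ?thesis by (simp add: eq_neg_iff_add_eq_0 add.commute)
qed

lemma HG'_W: "H * fps_deriv G \<in> W"
  unfolding HG' by (intro W_neg W_sum W_mult W_const W_pow W_G)

lemma H_deriv_W: "x \<in> W \<Longrightarrow> H * fps_deriv x \<in> W"
proof -
  assume "x \<in> W"
  then obtain c r where c: "c \<noteq> 0" and v: "fps_of_poly c * x = (\<Sum>l<d. fps_of_poly (r l) * G^l)"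
    unfolding W_def V_def by blast
  have "H * fps_deriv (fps_of_poly c * x) =
     (\<Sum>l<d. H * fps_of_poly (pderiv (r l)) * G^l + fps_of_poly (r l) * of_nat l * G^(l-1) * (H * fps_deriv G))"
    unfolding v
    by (simp add: fps_deriv_sum fps_of_poly_pderiv fps_deriv_power' sum_distrib_left algebra_simps)
  also have "\<dots> \<in> W"
    by (intro W_sum W_add W_mult W_const W_pow W_G H_W HG'_W W_of_nat)
  finally have A: "H * fps_deriv (fps_of_poly c * x) \<in> W" .
  have "fps_of_poly c * (H * fps_deriv x) = H * fps_deriv (fps_of_poly c * x) - fps_of_poly (pderiv c) * (H * x)"
    by (simp add: fps_of_poly_pderiv algebra_simps)
  also have "\<dots> \<in> W" by (rule W_diff[OF A W_mult[OF W_const W_mult[OF H_W \<open>x \<in> W\<close>]]])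
  finally show ?thesis using W_cancel[OF c] by blast
qed

lemma iter_W: "H^(2*i) * (fps_deriv^^i) G \<in> W"
proof (induction i)
  case 0 then show ?case using W_G by simp
next
  case (Suc i)
  define z where "z = H^(2*i) * (fps_deriv^^i) G"
  define Di where "Di = (fps_deriv^^i) G"
  have d1: "fps_deriv z = of_nat (2*i) * fps_deriv H * H^(2*i-1) * Di + H^(2*i) * fps_deriv Di"
    by (simp add: z_def Di_def fps_deriv_power')
  have eq: "H^(2*Suc i) * (fps_deriv^^Suc i) G = H * (H * fps_deriv z) - of_nat (2*i) * (H * fps_deriv H) * z"
  proof (cases i)
    case 0 then show ?thesis by (simp add: z_def power2_eq_square)
  next
    case (Suc i')
    then have k: "Suc (2*i - 1) = 2*i" by simp
    have hp: "H * H^(2*i - 1) = H^(2*i)" using k by (metis power_Suc)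
    have e1: "H^(2*Suc i) = H * H * H^(2*i)" by simp
    have e2: "(fps_deriv^^Suc i) G = fps_deriv Di" by (simp add: Di_def)
    have t1: "H * (H * fps_deriv z) = of_nat (2*i) * (H * fps_deriv H) * (H * H^(2*i-1)) * Di + H * H * H^(2*i) * fps_deriv Di"
      unfolding d1 distrib_left by (simp only: mult_ac)
    also have t2: "\<dots> = of_nat (2*i) * (H * fps_deriv H) * z + H * H * H^(2*i) * fps_deriv Di"
      unfolding hp z_def Di_def by (simp only: mult_ac)
    finally have "H * (H * fps_deriv z) - of_nat (2*i) * (H * fps_deriv H) * z = H * H * H^(2*i) * fps_deriv Di"
      by simp
    then show ?thesis unfolding e1 e2 by simp
  qed
  have "z \<in> W" using Suc z_def by simp
  then show ?case unfolding eq by (intro W_diff W_mult H_W H_deriv_W W_of_nat)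
qed

lemma iter_W': "i \<le> d \<Longrightarrow> H^(2*d) * (fps_deriv^^i) G \<in> W"
proof -
  assume "i \<le> d"
  then have e: "2*(d-i) + 2*i = 2*d" by simp
  have "H^(2*d) = H^(2*(d-i)) * H^(2*i)" by (simp only: power_add[symmetric] e)
  then have "H^(2*d) * (fps_deriv^^i) G = H^(2*(d-i)) * (H^(2*i) * (fps_deriv^^i) G)"
    by (simp only: mult.assoc)
  also have "\<dots> \<in> W" by (rule W_mult[OF W_pow[OF H_W] iter_W])
  finally show ?thesis .
qed

lemma dfinite: "\<exists>A. (\<exists>i\<le>d. A i \<noteq> 0) \<and> (\<Sum>i\<le>d. fps_of_poly (A i) * (fps_deriv^^i) G) = 0"
proof -
  define y where "y i = H^(2*d) * (fps_deriv^^i) G" for i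
  have "\<forall>i. \<exists>cr. i \<le> d \<longrightarrow> fst cr \<noteq> 0 \<and> fps_of_poly (fst cr) * y i = (\<Sum>l<d. fps_of_poly (snd cr l) * G^l)"
  proof
    fix i
    show "\<exists>cr. i \<le> d \<longrightarrow> fst cr \<noteq> 0 \<and> fps_of_poly (fst cr) * y i = (\<Sum>l<d. fps_of_poly (snd cr l) * G^l)"
    proof (cases "i \<le> d")
      case True
      then obtain c r where "c \<noteq> 0" "fps_of_poly c * y i = (\<Sum>l<d. fps_of_poly (r l) * G^l)"
        using iter_W'[OF True] unfolding W_def V_def y_def by blast
      then show ?thesis by (intro exI[of _ "(c, r)"]) simp
    qed simp
  qed
  from choice[OF this] obtain cr where cr:
    "\<And>i. i \<le> d \<Longrightarrow> fst (cr i) \<noteq> 0 \<and> fps_of_poly (fst (cr i)) * y i = (\<Sum>l<d. fps_of_poly (snd (cr i) l) * G^l)"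
    by blast
  define cf where "cf i = fst (cr i)" for i
  define rf where "rf i = snd (cr i)" for i
  have cf: "cf i \<noteq> 0" "fps_of_poly (cf i) * y i = (\<Sum>l<d. fps_of_poly (rf i l) * G^l)" if "i \<le> d" for i
    using cr[OF that] by (auto simp: cf_def rf_def)
  define B where "B = (\<Sum>i\<le>d. \<Sum>l<d. degree (rf i l))"
  have degB: "degree (rf i l) \<le> B" if "i \<le> d" "l < d" for i l
  proof -
    have "degree (rf i l) \<le> (\<Sum>l<d. degree (rf i l))" using that by (intro member_le_sum) auto
    also have "\<dots> \<le> B" unfolding B_def using that by (intro member_le_sum) auto
    finally show ?thesis .
  qed
  define M where "M = d * B"
  define I where "I = {..M} \<times> {..d}"
  define K where "K = {..<d} \<times> {..B+M}"
  define f where "f ji lk = coeff (monom 1 (fst ji) * rf (snd ji) (fst lk)) (snd lk)" for ji lk :: "nat \<times> nat"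
  have cardI: "card I = Suc M * Suc d" unfolding I_def by (simp add: card_cartesian_product)
  have cardK: "card K = d * Suc (B + M)" unfolding K_def by (simp add: card_cartesian_product)
  have "d * Suc (B + M) < Suc M * Suc d" unfolding M_def by (simp add: algebra_simps)
  then have "card K < card I" using cardI cardK by simp
  then obtain lam where lam1: "\<exists>ji\<in>I. lam ji \<noteq> 0" and lam2: "\<forall>lk\<in>K. (\<Sum>ji\<in>I. lam ji * f ji lk) = 0"
    using lin_dep_exists[of K I f] unfolding I_def K_def by auto
  have Pl0: "(\<Sum>ji\<in>I. smult (lam ji) (monom 1 (fst ji) * rf (snd ji) l)) = 0" if "l < d" for l
  proof (rule poly_eqI)
    fix k
    show "coeff (\<Sum>ji\<in>I. smult (lam ji) (monom 1 (fst ji) * rf (snd ji) l)) k = coeff 0 k"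
    proof (cases "k \<le> B + M")
      case True
      then have "(l, k) \<in> K" using that by (simp add: K_def)
      from bspec[OF lam2 this] show ?thesis by (simp add: coeff_sum f_def)
    next
      case False
      have "coeff (monom 1 (fst ji) * rf (snd ji) l) k = 0" if "ji \<in> I" for ji
      proof (rule coeff_eq_0)
        have "degree (monom (1::complex) (fst ji) * rf (snd ji) l) \<le> degree (monom (1::complex) (fst ji)) + degree (rf (snd ji) l)"
          by (rule degree_mult_le)
        also have "\<dots> \<le> M + B" using that degB[of "snd ji" l] \<open>l < d\<close> degree_monom_le[of "1::complex" "fst ji"]
          by (auto simp: I_def)
        finally show "degree (monom 1 (fst ji) * rf (snd ji) l) < k" using False by simp
      qed
      then show ?thesis by (simp add: coeff_sum)
    qed
  qed
  define S where "S = (\<Sum>ji\<in>I. fps_const (lam ji) * fps_X^(fst ji) * (fps_of_poly (cf (snd ji)) * y (snd ji)))"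
  have "S = (\<Sum>ji\<in>I. \<Sum>l<d. fps_const (lam ji) * fps_X^(fst ji) * (fps_of_poly (rf (snd ji) l) * G^l))"
    unfolding S_def
  proof (rule sum.cong[OF refl])
    fix ji assume "ji \<in> I"
    then have "snd ji \<le> d" by (auto simp: I_def)
    then show "fps_const (lam ji) * fps_X^(fst ji) * (fps_of_poly (cf (snd ji)) * y (snd ji)) =
       (\<Sum>l<d. fps_const (lam ji) * fps_X^(fst ji) * (fps_of_poly (rf (snd ji) l) * G^l))"
      using cf(2) by (simp add: sum_distrib_left)
  qed
  also have "\<dots> = (\<Sum>l<d. \<Sum>ji\<in>I. fps_const (lam ji) * fps_X^(fst ji) * (fps_of_poly (rf (snd ji) l) * G^l))"
    by (rule sum.swap)
  also have "\<dots> = (\<Sum>l<d. fps_of_poly (\<Sum>ji\<in>I. smult (lam ji) (monom 1 (fst ji) * rf (snd ji) l)) * G^l)"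
    by (simp add: fps_of_poly_sum fps_of_poly_smult fps_of_poly_mult fps_of_poly_monom' sum_distrib_right mult.assoc)
  also have "\<dots> = 0" using Pl0 by simp
  finally have S0: "S = 0" .
  define A where "A i = (\<Sum>j\<le>M. smult (lam (j, i)) (monom 1 j)) * cf i" for i
  have "S = (\<Sum>j\<le>M. \<Sum>i\<le>d. fps_const (lam (j,i)) * fps_X^j * (fps_of_poly (cf i) * y i))"
    unfolding S_def I_def sum.cartesian_product by (intro sum.cong refl) auto
  also have "\<dots> = (\<Sum>i\<le>d. \<Sum>j\<le>M. fps_const (lam (j,i)) * fps_X^j * (fps_of_poly (cf i) * y i))"
    by (rule sum.swap)
  also have "\<dots> = H^(2*d) * (\<Sum>i\<le>d. fps_of_poly (A i) * (fps_deriv^^i) G)"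
    by (simp add: A_def y_def fps_of_poly_sum fps_of_poly_smult fps_of_poly_mult fps_of_poly_monom'
        sum_distrib_left sum_distrib_right mult_ac)
  finally have "H^(2*d) * (\<Sum>i\<le>d. fps_of_poly (A i) * (fps_deriv^^i) G) = 0" using S0 by simp
  then have eq: "(\<Sum>i\<le>d. fps_of_poly (A i) * (fps_deriv^^i) G) = 0" using H_nz by simp
  from lam1 obtain j0 i0 where ji0: "(j0, i0) \<in> I" "lam (j0, i0) \<noteq> 0" by auto
  have "coeff (\<Sum>j\<le>M. smult (lam (j, i0)) (monom 1 j)) j0 = (\<Sum>j\<le>M. if j = j0 then lam (j, i0) else 0)"
    unfolding coeff_sum by (intro sum.cong refl) (simp add: coeff_monom)
  also have "\<dots> = lam (j0, i0)" using ji0 by (simp add: I_def sum.delta)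
  finally have "coeff (\<Sum>j\<le>M. smult (lam (j, i0)) (monom 1 j)) j0 = lam (j0, i0)" .
  then have "(\<Sum>j\<le>M. smult (lam (j, i0)) (monom (1::complex) j)) \<noteq> 0" using ji0 by auto
  then have "A i0 \<noteq> 0" "i0 \<le> d" using cf(1)[of i0] ji0 by (auto simp: A_def I_def)
  then show ?thesis using eq by blast
qed

end

lemma ind_to_e:
  fixes S :: "nat set"
  assumes inf: "infinite S" and d: "d \<ge> 1" and per: "\<And>i. i \<ge> N \<Longrightarrow> (i + d \<in> S \<longleftrightarrow> i \<in> S)"
  shows "\<exists>m. m \<ge> 1 \<and> (\<forall>k\<ge>N. enumerate S (k+m) = enumerate S k + d)"
proof -
  define p where "p = enumerate S"
  have pS: "p k \<in> S" for k unfolding p_def using enumerate_in_set[OF inf] .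
  have pmono: "p k < p l \<longleftrightarrow> k < l" for k l unfolding p_def using inf by simp
  have pinj: "p k = p l \<longleftrightarrow> k = l" for k l by (metis pmono less_irrefl linorder_neqE_nat)
  have pex: "x \<in> S \<Longrightarrow> \<exists>l. p l = x" for x unfolding p_def using enumerate_Ex[OF inf] by blast
  have pge: "k \<le> p k" for k unfolding p_def using le_enumerate[OF inf] .
  define psi where "psi k = (SOME j. p j = p k + d)" for k
  have psi: "p (psi k) = p k + d" if "k \<ge> N" for k
  proof -
    have "p k \<ge> N" using pge[of k] that by simp
    then have "p k + d \<in> S" using per pS by blast
    then obtain j where "p j = p k + d" using pex by blast
    then show ?thesis unfolding psi_def by (rule someI)
  qed
  have step: "psi (Suc k) = Suc (psi k)" if "k \<ge> N" for k
  proof (rule ccontr)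
    assume ne: "psi (Suc k) \<noteq> Suc (psi k)"
    have "p (psi k) < p (psi (Suc k))" using psi[of k] psi[of "Suc k"] that pmono[of k "Suc k"] by simp
    then have "psi k < psi (Suc k)" using pmono by blast
    with ne have lt: "Suc (psi k) < psi (Suc k)" by simp
    define j where "j = Suc (psi k)"
    have j1: "p k + d < p j" using psi[OF that] pmono[of "psi k" j] by (simp add: j_def)
    have j2: "p j < p (Suc k) + d" using psi[of "Suc k"] that pmono[of j "psi (Suc k)"] lt by (simp add: j_def)
    define x where "x = p j - d"
    have "x \<ge> N" using j1 pge[of k] that unfolding x_def by linarith
    moreover have "x + d \<in> S" using j1 pS[of j] unfolding x_def by simp
    ultimately have "x \<in> S" using per by blast
    then obtain l where l: "p l = x" using pex by blast
    have "p k < p l" "p l < p (Suc k)" using j1 j2 l unfolding x_def by linarith+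
    then show False using pmono by (metis Suc_lessD less_Suc_eq less_asym)
  qed
  have psiN: "psi (N + t) = psi N + t" for t
    by (induction t) (auto simp: step)
  have "p N < p (psi N)" using psi[of N] d by simp
  then have gt: "N < psi N" using pmono by blast
  define m where "m = psi N - N"
  show ?thesis
  proof (intro exI[of _ m] conjI allI impI)
    show "m \<ge> 1" using gt by (simp add: m_def)
    fix k assume "k \<ge> N"
    then have "psi k = k + m" using psiN[of "k - N"] gt by (simp add: m_def)
    then show "enumerate S (k+m) = enumerate S k + d" using psi[OF \<open>k \<ge> N\<close>] by (simp add: p_def)
  qed
qed

lemma e_to_ind:
  fixes S :: "nat set"
  assumes inf: "infinite S" and m: "m \<ge> 1"
    and per: "\<And>k. k \<ge> K \<Longrightarrow> enumerate S (Suc (k+m)) - enumerate S (k+m) = enumerate S (Suc k) - enumerate S k"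
  shows "\<exists>T. T \<ge> 1 \<and> (\<forall>i\<ge>enumerate S K. (i + T \<in> S \<longleftrightarrow> i \<in> S))"
proof -
  define p where "p = enumerate S"
  have pS: "p k \<in> S" for k unfolding p_def using enumerate_in_set[OF inf] .
  have pmono: "p k < p l \<longleftrightarrow> k < l" for k l unfolding p_def using inf by simp
  have pmono': "p k \<le> p l \<longleftrightarrow> k \<le> l" for k l unfolding p_def using inf by simp
  have pex: "x \<in> S \<Longrightarrow> \<exists>l. p l = x" for x unfolding p_def using enumerate_Ex[OF inf] by blast
  define T where "T = p (K+m) - p K"
  have shift: "p (k+m) = p k + T" if "k \<ge> K" for k
    using that
  proof (induction k rule: dec_induct)
    case base then show ?case using pmono'[of K "K+m"] by (simp add: T_def)
  next
    case (step k)
    have a: "p k \<le> p (Suc k)" "p (k+m) \<le> p (Suc (k+m))" using pmono' by auto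
    have "p (Suc (k+m)) - p (k+m) = p (Suc k) - p k" using per[OF step.hyps(1)] by (simp add: p_def)
    then show ?case using step.IH a by simp
  qed
  have T1: "T \<ge> 1" using pmono[of K "K+m"] m by (simp add: T_def)
  show ?thesis
  proof (intro exI[of _ T] conjI allI impI T1)
    fix i assume i: "enumerate S K \<le> i"
    show "i + T \<in> S \<longleftrightarrow> i \<in> S"
    proof
      assume "i \<in> S"
      then obtain k where k: "p k = i" using pex by blast
      then have "k \<ge> K" using i pmono'[of K k] unfolding p_def by simp
      then show "i + T \<in> S" using shift k pS by metis
    next
      assume "i + T \<in> S"
      then obtain j where j: "p j = i + T" using pex by blast
      have "p (K+m) \<le> p j" using shift[of K] i j by (simp add: p_def)
      then have "K + m \<le> j" using pmono' by blast
      then have "p (j - m + m) = p (j - m) + T" using shift[of "j-m"] by simp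
      then have "p (j - m) = i" using j \<open>K+m \<le> j\<close> by simp
      then show "i \<in> S" using pS by metis
    qed
  qed
qed

lemma ratpoly_fps_nth: "ratpoly_fps q $ n = of_rat (coeff q n)"
  by (simp add: ratpoly_fps_def coeff_map_poly)

lemma ratpoly_fps_nz: "q \<noteq> 0 \<Longrightarrow> ratpoly_fps q \<noteq> 0"
proof
  assume "q \<noteq> 0" "ratpoly_fps q = 0"
  then have "ratpoly_fps q $ degree q = 0" by simp
  then show False using \<open>q \<noteq> 0\<close> by (simp add: ratpoly_fps_nth)
qed

lemma map_of_rat_nz: "q \<noteq> 0 \<Longrightarrow> map_poly (of_rat :: rat \<Rightarrow> complex) q \<noteq> 0"
proof
  assume "q \<noteq> 0" "map_poly (of_rat :: rat \<Rightarrow> complex) q = 0"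
  then have "coeff (map_poly (of_rat :: rat \<Rightarrow> complex) q) (degree q) = 0" by simp
  then show False using \<open>q \<noteq> 0\<close> by (simp add: coeff_map_poly)
qed

lemma alg_periodic:
  fixes G :: "complex fps" and Q :: "nat \<Rightarrow> complex poly"
  assumes "Q d0 \<noteq> 0" "(\<Sum>l\<le>d0. fps_of_poly (Q l) * G^l) = 0" and fin: "finite (range (\<lambda>n. G $ n))"
  shows "eventually_periodic (\<lambda>n. G $ n)"
proof -
  define P where "P d = (\<exists>Q. Q d \<noteq> 0 \<and> (\<Sum>l\<le>d. fps_of_poly (Q l) * G^l) = 0)" for d
  have "P d0" using assms unfolding P_def by blast
  define d where "d = (LEAST d. P d)"
  have "P d" unfolding d_def by (rule LeastI) fact
  then obtain Qc where Qc: "Qc d \<noteq> 0" "(\<Sum>l\<le>d. fps_of_poly (Qc l) * G^l) = 0" unfolding P_def by blast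
  have mn: "d \<le> d'" if "Q' d' \<noteq> 0" "(\<Sum>l\<le>d'. fps_of_poly (Q' l) * G^l) = 0" for d' Q'
    unfolding d_def by (rule Least_le) (use that in \<open>auto simp: P_def\<close>)
  have "\<exists>A. (\<exists>i\<le>d. A i \<noteq> 0) \<and> (\<Sum>i\<le>d. fps_of_poly (A i) * (fps_deriv^^i) G) = 0"
  proof (rule dfinite[where G=G and d=d and Qc=Qc])
    show "Qc d \<noteq> 0" by (rule Qc(1))
    show "(\<Sum>l\<le>d. fps_of_poly (Qc l) * G^l) = 0" by (rule Qc(2))
    fix d' Q' assume "Q' d' \<noteq> 0" "(\<Sum>l\<le>d'. fps_of_poly (Q' l) * G^l) = 0"
    then show "d \<le> d'" by (rule mn)
  qed
  then obtain A where A: "\<exists>i\<le>d. A i \<noteq> 0" "(\<Sum>i\<le>d. fps_of_poly (A i) * (fps_deriv^^i) G) = 0"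
    by blast
  obtain R q where q: "\<exists>t\<le>R. q t \<noteq> 0" "\<forall>n. (\<Sum>t\<le>R. poly (q t) (of_nat n) * G $ (n+t)) = 0"
    using dfinite_rec[OF A] by blast
  show ?thesis by (rule poly_rec_periodic[OF fin q(1)]) (use q(2) in simp)
qed

theorem corollary3p6:
  fixes w :: "nat \<Rightarrow> 'a::finite" and a :: 'a
  assumes "infinite {i. w i = a}"
    and "finite {occ_pos w a n - occ_pos w a (n - 1) | n. n \<ge> 2}"
  shows "(eventually_periodic (indicator_seq w a) \<longrightarrow> in_rat_fun_field (pos_series w a))
       \<and> (\<not> eventually_periodic (indicator_seq w a) \<longrightarrow> transcendental_rat_fun (pos_series w a))"
proof -
  define S where "S = {i. w i = a}"
  have inf: "infinite S" using assms(1) by (simp add: S_def)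
  define p where "p = enumerate S"
  have pmono': "p k \<le> p l \<longleftrightarrow> k \<le> l" for k l unfolding p_def using inf by simp
  have occ: "occ_pos w a n = p (n-1)" for n by (simp add: occ_pos_def p_def S_def)
  define F where "F = pos_series w a"
  have Fn: "F $ n = (if n = 0 then 0 else of_nat (p (n-1)))" for n
    by (simp add: F_def pos_series_def occ)
  define G where "G = (1 - fps_X) * F"
  define e where "e k = p (Suc k) - p k" for k
  have Gn: "G $ n = F $ n - (if n = 0 then 0 else F $ (n - 1))" for n
    by (simp add: G_def algebra_simps)
  have G0: "G $ 0 = 0" by (simp add: Gn Fn)
  have G1: "G $ Suc 0 = of_nat (p 0)" by (simp add: Gn Fn)
  have GSS: "G $ Suc (Suc k) = of_nat (e k)" for k
    using pmono'[of k "Suc k"] by (simp add: Gn Fn e_def of_nat_diff)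
  have ind: "indicator_seq w a n = (if n \<in> S then 1 else 0)" for n
    by (simp add: indicator_seq_def S_def)
  have to_e: "\<exists>m K. m \<ge> 1 \<and> (\<forall>k\<ge>K. e (k+m) = e k)" if "eventually_periodic (indicator_seq w a)"
  proof -
    from that obtain N d where d: "d \<ge> 1" "\<forall>n\<ge>N. indicator_seq w a (n + d) = indicator_seq w a n"
      unfolding eventually_periodic_def by blast
    have "i + d \<in> S \<longleftrightarrow> i \<in> S" if "i \<ge> N" for i
      using d(2)[rule_format, OF that] unfolding ind by (auto split: if_splits)
    from ind_to_e[OF inf d(1) this] obtain m where m: "m \<ge> 1" "\<forall>k\<ge>N. p (k+m) = p k + d"
      unfolding p_def by blast
    have "e (k+m) = e k" if "k \<ge> N" for k
    proof -
      have "p (Suc k + m) = p (Suc k) + d" "p (k+m) = p k + d"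
        using m(2)[rule_format, of "Suc k"] m(2)[rule_format, of k] that by auto
      then show ?thesis unfolding e_def by simp
    qed
    then show ?thesis using m(1) by blast
  qed
  have from_e: "eventually_periodic (indicator_seq w a)" if "m \<ge> 1" "\<forall>k\<ge>K. e (k+m) = e k" for m K
  proof -
    have "enumerate S (Suc (k+m)) - enumerate S (k+m) = enumerate S (Suc k) - enumerate S k" if "k \<ge> K" for k
      using \<open>\<forall>k\<ge>K. e (k+m) = e k\<close> that by (simp add: e_def p_def)
    from e_to_ind[OF inf \<open>m \<ge> 1\<close> this] obtain T where T: "T \<ge> 1" "\<forall>i\<ge>enumerate S K. (i + T \<in> S \<longleftrightarrow> i \<in> S)"
      by blast
    show ?thesis unfolding eventually_periodic_def
      by (rule exI[of _ "enumerate S K"], rule exI[of _ T]) (use T in \<open>simp add: ind\<close>)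
  qed
  show ?thesis
  proof (intro conjI impI)
    assume "eventually_periodic (indicator_seq w a)"
    from to_e[OF this] obtain m K where mK: "m \<ge> 1" "\<forall>k\<ge>K. e (k+m) = e k" by blast
    define gi where "gi n = (if n = 0 then 0 else if n = 1 then int (p 0) else int (e (n-2)))" for n
    have Ggi: "G $ n = of_int (gi n)" for n
    proof (cases n)
      case 0 then show ?thesis by (simp add: G0 gi_def)
    next
      case (Suc n')
      then show ?thesis
      proof (cases n')
        case 0 then show ?thesis using Suc by (simp add: G1 gi_def)
      next
        case (Suc k) then show ?thesis using \<open>n = Suc n'\<close> by (simp add: GSS gi_def)
      qed
    qed
    define hi where "hi n = gi n - (if n < m then 0 else gi (n - m))" for n
    define L where "L = K + 2 + m"
    define Hs where "Hs = (1 - fps_X^m) * G"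
    have Hs2: "Hs = G - fps_X^m * G" unfolding Hs_def by (simp add: left_diff_distrib)
    have Hn: "Hs $ n = of_int (hi n)" for n
      unfolding Hs2 fps_sub_nth fps_X_power_mult_nth Ggi hi_def by simp
    have hi0: "hi n = 0" if "n \<ge> L" for n
    proof -
      define k where "k = n - m - 2"
      have k: "n - m = Suc (Suc k)" "k \<ge> K" using that unfolding L_def k_def by auto
      have "n = Suc (Suc (k + m))" using k that unfolding L_def by linarith
      then show ?thesis using k mK(2) unfolding hi_def gi_def by auto
    qed
    define A where "A = (\<Sum>n<L. monom (of_int (hi n) :: rat) n)"
    define B :: "rat poly" where "B = 1 - monom 1 1 - monom 1 m + monom 1 (m+1)"
    have "coeff B 0 = 1" using mK(1) by (simp add: B_def coeff_monom)
    then have Bnz: "B \<noteq> 0" by auto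
    have XX: "(1 - fps_X^m) * (1 - fps_X) = (1 - fps_X - fps_X^m + fps_X^(m+1) :: complex fps)"
      by (simp add: algebra_simps)
    have RB: "ratpoly_fps B = (1 - fps_X^m) * (1 - fps_X)"
      unfolding XX by (rule fps_ext) (simp add: ratpoly_fps_nth B_def coeff_monom fps_X_power_nth
          of_rat_add of_rat_diff del: power_Suc)
    have RA: "ratpoly_fps A = Hs"
    proof (rule fps_ext)
      fix n
      have "coeff A n = (if n < L then of_int (hi n) else 0)"
        by (simp add: A_def coeff_sum coeff_monom)
      then show "ratpoly_fps A $ n = Hs $ n" using hi0[of n] by (simp add: ratpoly_fps_nth Hn)
    qed
    have "ratpoly_fps B * F = ratpoly_fps A" unfolding RB RA Hs_def G_def by (simp add: mult.assoc)
    then show "in_rat_fun_field (pos_series w a)" unfolding in_rat_fun_field_def F_def using Bnz by blast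
  next
    assume np: "\<not> eventually_periodic (indicator_seq w a)"
    show "transcendental_rat_fun (pos_series w a)"
      unfolding transcendental_rat_fun_def
    proof (intro allI impI notI)
      fix Q :: "rat poly poly"
      assume Qnz: "Q \<noteq> 0" and Q0: "poly (map_poly ratpoly_fps Q) (pos_series w a) = 0"
      define d0 where "d0 = degree Q"
      define Qc where "Qc l = map_poly (of_rat :: rat \<Rightarrow> complex) (coeff Q l)" for l
      have r0: "ratpoly_fps 0 = 0" by (simp add: ratpoly_fps_def)
      have "degree (map_poly ratpoly_fps Q) = d0"
        unfolding d0_def by (rule degree_map_poly) (rule ratpoly_fps_nz)
      then have relF: "(\<Sum>l\<le>d0. fps_of_poly (Qc l) * F^l) = 0"
        using Q0 unfolding F_def poly_altdef by (simp add: coeff_map_poly r0 Qc_def ratpoly_fps_def)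
      have Qcnz: "Qc d0 \<noteq> 0" unfolding Qc_def d0_def using Qnz by (intro map_of_rat_nz) simp
      define Qg where "Qg l = Qc l * [:1, -1:]^(d0 - l)" for l
      have fX: "fps_of_poly [:1, -1:] = (1 - fps_X :: complex fps)"
        by (simp add: fps_of_poly_pCons fps_of_poly_const algebra_simps)
      have "(\<Sum>l\<le>d0. fps_of_poly (Qg l) * G^l) = (\<Sum>l\<le>d0. (1 - fps_X)^d0 * (fps_of_poly (Qc l) * F^l))"
      proof (rule sum.cong[OF refl])
        fix l assume "l \<in> {..d0}"
        then have "(1 - fps_X :: complex fps)^d0 = (1 - fps_X)^(d0-l) * (1 - fps_X)^l"
          by (simp add: power_add[symmetric])
        then show "fps_of_poly (Qg l) * G^l = (1 - fps_X)^d0 * (fps_of_poly (Qc l) * F^l)"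
          by (simp add: Qg_def fps_of_poly_mult fps_of_poly_power fX G_def power_mult_distrib mult_ac)
      qed
      also have "\<dots> = 0" using relF by (simp add: sum_distrib_left[symmetric])
      finally have relG: "(\<Sum>l\<le>d0. fps_of_poly (Qg l) * G^l) = 0" .
      have Qgnz: "Qg d0 \<noteq> 0" using Qcnz by (simp add: Qg_def)
      define Dset where "Dset = {occ_pos w a n - occ_pos w a (n - 1) | n. n \<ge> 2}"
      have Gin: "G $ n \<in> {0, of_nat (p 0)} \<union> (of_nat ` Dset)" for n
      proof (cases n)
        case 0 then show ?thesis by (simp add: G0)
      next
        case (Suc n')
        show ?thesis
        proof (cases n')
          case 0 then show ?thesis using Suc by (simp add: G1)
        next
          case (Suc k)
          have "e k \<in> Dset" unfolding Dset_def e_def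
            by (rule CollectI, rule exI[of _ "Suc (Suc k)"]) (simp add: occ)
          then show ?thesis using \<open>n = Suc n'\<close> Suc by (simp add: GSS)
        qed
      qed
      then have "range (\<lambda>n. G $ n) \<subseteq> {0, of_nat (p 0)} \<union> (of_nat ` Dset)" by auto
      moreover have "finite ({0, of_nat (p 0)} \<union> ((of_nat :: nat \<Rightarrow> complex) ` Dset))"
        using assms(2) by (simp add: Dset_def)
      ultimately have fin: "finite (range (\<lambda>n. G $ n))" by (rule finite_subset)
      from alg_periodic[OF Qgnz relG fin] obtain N d where
        Nd: "d \<ge> 1" "\<forall>n\<ge>N. G $ (n + d) = G $ n" unfolding eventually_periodic_def by blast
      have "e (k+d) = e k" if "k \<ge> N" for k
      proof -
        have "G $ (Suc (Suc k) + d) = G $ Suc (Suc k)" using Nd(2)[rule_format, of "Suc (Suc k)"] that by simp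
        then show ?thesis by (simp add: GSS)
      qed
      then have "eventually_periodic (indicator_seq w a)" using from_e[OF Nd(1)] by blast
      then show False using np by simp
    qed
  qed
qed

end
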